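(* Let $c\in\mathcal{C}$ be in addition piecewise twice differentiable with bounded second derivative. For each $n$, let $0=\theta_{n,0}<\theta_{n,1}<\dots<\theta_{n,k_n}=2\pi$ and let $c_n$ be the polygonal curve with vertices $c(\theta_{n,0}),c(\theta_{n,1}),\dots,c(\theta_{n,k_n})$, parametrized as the piecewise linear interpolation of $c$ at the parameters $\theta_{n,i}$. If $\max_i(\theta_{n,i+1}-\theta_{n,i})\to 0$ as $n\to\infty$, then $\mu_{c_n}$ converges weakly to $\mu_c$.
   Context: The plane is identified with $\mathbb{C}$, and $\mathbb{S}^1$ with $[0,2\pi)$ (or the unit circle in $\mathbb{C}$). $\mathcal{C}$ denotes the set of Lipschitz maps $c:\mathbb{S}^1\to\mathbb{C}$ with $c'(\theta)\neq 0$ for a.e. $\theta$. For $c\in\mathcal{C}$, the Gauss map is $T_c(\theta)=c'(\theta)/|c'(\theta)|$, and the length measure of $c$ is the positive Radon measure $\mu_c$ on $\mathbb{S}^1$ defined by $\mu_c(B)=\int_{T_c^{-1}(B)}|c'(\theta)|d\theta$ for Borel $B$. Weak convergence of measures on $\mathbb{S}^1$ means convergence of integrals against every continuous function on $\mathbb{S}^1$. *)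

theory Defs
  imports "HOL-Analysis.Analysis"
begin

text \<open>Curves \<open>S^1 \<rightarrow> \<complex>\<close> are represented as \<open>2\<pi>\<close>-periodic maps \<open>real \<Rightarrow> complex\<close>;
  the derivative \<open>c'\<close> is the (a.e. existing) vector derivative.\<close>

definition periodic_2pi :: "(real \<Rightarrow> complex) \<Rightarrow> bool" where
  "periodic_2pi c \<longleftrightarrow> (\<forall>t. c (t + 2*pi) = c t)"

definition curve_class :: "(real \<Rightarrow> complex) \<Rightarrow> bool" where
  "curve_class c \<longleftrightarrow> periodic_2pi c \<and> (\<exists>L. L-lipschitz_on UNIV c) \<and>
     (AE t in lborel. c differentiable (at t) \<and> vector_derivative c (at t) \<noteq> 0)"

text \<open>Gauss map \<open>T_c = c'/|c'|\<close> (with an irrelevant value on the null set where it is undefined),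
  taking values in the unit circle.\<close>
definition gauss_map :: "(real \<Rightarrow> complex) \<Rightarrow> real \<Rightarrow> complex" where
  "gauss_map c t = (if c differentiable (at t) \<and> vector_derivative c (at t) \<noteq> 0
      then sgn (vector_derivative c (at t)) else 1)"

text \<open>Length measure \<open>\<mu>_c(B) = \<integral>_{T_c^{-1}(B)} |c'|\<close>, a measure on the unit circle.\<close>
definition length_measure :: "(real \<Rightarrow> complex) \<Rightarrow> complex measure" where
  "length_measure c =
     distr (density (lebesgue_on {0..<2*pi}) (\<lambda>t. ennreal (norm (vector_derivative c (at t)))))
           (restrict_space borel (sphere 0 1)) (gauss_map c)"

definition weak_conv_circle :: "(nat \<Rightarrow> complex measure) \<Rightarrow> complex measure \<Rightarrow> bool" where
  "weak_conv_circle \<mu>s \<mu> \<longleftrightarrow>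
     (\<forall>f :: complex \<Rightarrow> real. continuous_on (sphere 0 1) f \<longrightarrow>
        (\<lambda>n. integral\<^sup>L (\<mu>s n) f) \<longlonglongrightarrow> integral\<^sup>L \<mu> f)"

definition piecewise_C2_bounded :: "(real \<Rightarrow> complex) \<Rightarrow> bool" where
  "piecewise_C2_bounded c \<longleftrightarrow>
     (\<exists>S M c1 c2. finite S \<and>
        (\<forall>t\<in>{0<..<2*pi} - S. (c has_vector_derivative c1 t) (at t) \<and>
                              (c1 has_vector_derivative c2 t) (at t) \<and> norm (c2 t) \<le> M))"

definition polygonal_interp ::
  "(real \<Rightarrow> complex) \<Rightarrow> (nat \<Rightarrow> real) \<Rightarrow> nat \<Rightarrow> (real \<Rightarrow> complex) \<Rightarrow> bool" where
  "polygonal_interp c \<theta> k cn \<longleftrightarrow>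
     \<theta> 0 = 0 \<and> \<theta> k = 2*pi \<and> (\<forall>i<k. \<theta> i < \<theta> (Suc i)) \<and> periodic_2pi cn \<and>
     (\<forall>i<k. \<forall>t\<in>{\<theta> i..\<theta> (Suc i)}.
        cn t = c (\<theta> i) + of_real ((t - \<theta> i) / (\<theta> (Suc i) - \<theta> i)) * (c (\<theta> (Suc i)) - c (\<theta> i)))"

end

theory Submission imports Defs begin

lemma spike_meas:
  fixes g h :: "real \<Rightarrow> 'b::euclidean_space"
  assumes "g \<in> borel_measurable (lebesgue_on S)" "S \<in> sets lebesgue" "negligible N"
    "\<And>t. t \<in> S - N \<Longrightarrow> h t = g t"
  shows "h \<in> borel_measurable (lebesgue_on S)"
  using measurable_on_spike[of g S N h] measurable_on_iff_borel_measurable assms by metis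

lemma chord_tendsto:
  fixes d :: "real \<Rightarrow> 'a::real_normed_vector"
  assumes der: "(d has_vector_derivative D) (at t)" and ab: "\<And>n. a n \<le> t" "\<And>n. t \<le> b n" "\<And>n. a n < b n"
    and lim: "(\<lambda>n. b n - a n) \<longlonglongrightarrow> 0"
  shows "(\<lambda>n. (d (b n) - d (a n)) /\<^sub>R (b n - a n)) \<longlonglongrightarrow> D"
proof (rule LIMSEQ_I)
  fix e :: real assume e: "e > 0"
  have "(d has_derivative (\<lambda>h. h *\<^sub>R D)) (at t within UNIV)"
    using der by (simp add: has_vector_derivative_def)
  then obtain \<delta> where \<delta>: "\<delta> > 0" and
    H: "\<And>y. norm (y - t) < \<delta> \<Longrightarrow> norm (d y - d t - (y - t) *\<^sub>R D) \<le> (e/2) * norm (y - t)"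
    unfolding has_derivative_within_alt using e by (meson UNIV_I half_gt_zero)
  from lim \<delta> obtain M where M: "\<And>n. n \<ge> M \<Longrightarrow> norm (b n - a n - 0) < \<delta>"
    using LIMSEQ_D by blast
  show "\<exists>no. \<forall>n\<ge>no. norm ((d (b n) - d (a n)) /\<^sub>R (b n - a n) - D) < e"
  proof (intro exI allI impI)
    fix n assume "n \<ge> M"
    then have m: "b n - a n < \<delta>" using M by force
    have h1: "norm (d (b n) - d t - (b n - t) *\<^sub>R D) \<le> (e/2) * (b n - t)"
      using H[of "b n"] m ab[of n] by auto
    have h2: "norm (d (a n) - d t - (a n - t) *\<^sub>R D) \<le> (e/2) * (t - a n)"
      using H[of "a n"] m ab[of n] by auto
    have eq: "d (b n) - d (a n) - (b n - a n) *\<^sub>R D =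
       (d (b n) - d t - (b n - t) *\<^sub>R D) - (d (a n) - d t - (a n - t) *\<^sub>R D)"
      by (simp add: algebra_simps)
    have "norm (d (b n) - d (a n) - (b n - a n) *\<^sub>R D) \<le> (e/2) * (b n - a n)"
      unfolding eq using norm_triangle_ineq4[of "d (b n) - d t - (b n - t) *\<^sub>R D" "d (a n) - d t - (a n - t) *\<^sub>R D"] h1 h2
      by (simp add: algebra_simps)
    moreover have "(d (b n) - d (a n)) /\<^sub>R (b n - a n) - D = (d (b n) - d (a n) - (b n - a n) *\<^sub>R D) /\<^sub>R (b n - a n)"
      using ab[of n] by (simp add: scaleR_diff_right)
    ultimately have "norm ((d (b n) - d (a n)) /\<^sub>R (b n - a n) - D) \<le> e/2"
      using ab[of n] by (simp add: divide_simps mult.commute)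
    then show "norm ((d (b n) - d (a n)) /\<^sub>R (b n - a n) - D) < e" using e by linarith
  qed
qed



lemma gauss_sphere: "gauss_map d t \<in> sphere 0 1"
  by (simp add: gauss_map_def norm_sgn)

lemma gauss_norm: "norm (gauss_map d t) = 1"
  by (simp add: gauss_map_def norm_sgn)

lemma length_integral:
  fixes f :: "complex \<Rightarrow> real"
  assumes gm: "gauss_map d \<in> borel_measurable (lebesgue_on {0..<2*pi})"
  and nm: "(\<lambda>t. norm (vector_derivative d (at t))) \<in> borel_measurable (lebesgue_on {0..<2*pi})"
  and f: "continuous_on (sphere 0 1) f"
  shows "integral\<^sup>L (length_measure d) f = integral\<^sup>L (lebesgue_on {0..<2*pi})
     (\<lambda>t. norm (vector_derivative d (at t)) * f (gauss_map d t))"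
proof -
  let ?M = "lebesgue_on {0..<2*pi}"
  let ?w = "\<lambda>t. norm (vector_derivative d (at t))"
  let ?N = "restrict_space borel (sphere (0::complex) 1)"
  have G: "gauss_map d \<in> measurable ?M ?N"
    by (rule measurable_restrict_space2) (use gm gauss_sphere in auto)
  have G': "gauss_map d \<in> measurable (density ?M ?w) ?N"
    using G by (simp cong: measurable_cong_sets)
  have fm: "f \<in> borel_measurable ?N"
    using f by (rule borel_measurable_continuous_on_restrict)
  have "integral\<^sup>L (length_measure d) f = integral\<^sup>L (density ?M ?w) (\<lambda>t. f (gauss_map d t))"
    unfolding length_measure_def by (rule integral_distr[OF G' fm])
  also have "\<dots> = integral\<^sup>L ?M (\<lambda>t. ?w t *\<^sub>R f (gauss_map d t))"
    by (rule integral_density) (use measurable_compose[OF G fm] nm in auto)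
  finally show ?thesis by simp
qed

lemma gauss_meas:
  assumes vm: "(\<lambda>t. vector_derivative d (at t)) \<in> borel_measurable (lebesgue_on S)"
    and S: "S \<in> sets lebesgue" and N: "negligible N" and dif: "\<And>t. t \<in> S - N \<Longrightarrow> d differentiable (at t)"
  shows "gauss_map d \<in> borel_measurable (lebesgue_on S)"
proof (rule spike_meas[OF _ S N])
  note vm[measurable]
  show "(\<lambda>t. if vector_derivative d (at t) \<noteq> 0 then sgn (vector_derivative d (at t)) else 1) \<in> borel_measurable (lebesgue_on S)"
    by measurable
  show "gauss_map d t = (if vector_derivative d (at t) \<noteq> 0 then sgn (vector_derivative d (at t)) else 1)"
    if "t \<in> S - N" for t using dif[OF that] by (simp add: gauss_map_def)
qed

lemma vd_meas:
  fixes d :: "real \<Rightarrow> complex"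
  assumes cont: "continuous_on UNIV d"
    and S: "S \<in> sets lebesgue" and N: "negligible N" and dif: "\<And>t. t \<in> S - N \<Longrightarrow> d differentiable (at t)"
  shows "(\<lambda>t. vector_derivative d (at t)) \<in> borel_measurable (lebesgue_on S)"
proof (rule spike_meas[OF _ S N])
  let ?q = "\<lambda>i t. (d (t + 1/real (Suc i)) - d t) /\<^sub>R (t + 1/real (Suc i) - t)"
  have [measurable]: "?q i \<in> borel_measurable (lebesgue_on S)" for i
  proof (rule continuous_imp_measurable_on_sets_lebesgue[OF _ S])
    have "continuous_on UNIV (?q i)"
      by (intro continuous_intros continuous_on_compose2[OF cont]) auto
    then show "continuous_on S (?q i)" by (rule continuous_on_subset) auto
  qed
  show "(\<lambda>t. lim (\<lambda>i. ?q i t)) \<in> borel_measurable (lebesgue_on S)"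
    by measurable
  show "vector_derivative d (at t) = lim (\<lambda>i. ?q i t)" if "t \<in> S - N" for t
  proof -
    have "(\<lambda>i. ?q i t) \<longlonglongrightarrow> vector_derivative d (at t)"
    proof (rule chord_tendsto[where a="\<lambda>_. t" and b="\<lambda>i. t + 1/real (Suc i)"])
      show "(d has_vector_derivative vector_derivative d (at t)) (at t)"
        using dif[OF that] vector_derivative_works by blast
      show "(\<lambda>n. t + 1 / real (Suc n) - t) \<longlonglongrightarrow> 0"
        using LIMSEQ_inverse_real_of_nat by (simp add: inverse_eq_divide)
    qed auto
    then show ?thesis by (simp add: limI)
  qed
qed


lemma theta_mono:
  fixes \<theta> :: "nat \<Rightarrow> real"
  assumes "\<forall>i<k. \<theta> i < \<theta> (Suc i)" "i < j" "j \<le> k"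
  shows "\<theta> i < \<theta> j"
  using assms(2,3)
proof (induction j)
  case 0 then show ?case by simp
next
  case (Suc j)
  show ?case
  proof (cases "i = j")
    case True then show ?thesis using assms(1) Suc by auto
  next
    case False
    then have "\<theta> i < \<theta> j" using Suc by auto
    also have "\<theta> j < \<theta> (Suc j)" using assms(1) Suc by auto
    finally show ?thesis .
  qed
qed

lemma seg_exists:
  fixes \<theta> :: "nat \<Rightarrow> real"
  assumes "\<forall>i<k. \<theta> i < \<theta> (Suc i)" "\<theta> 0 \<le> t" "t < \<theta> k"
  shows "\<exists>i<k. \<theta> i \<le> t \<and> t < \<theta> (Suc i)"
  using assms
proof (induction k)
  case 0 then show ?case by simp
next
  case (Suc k)
  show ?case
  proof (cases "t < \<theta> k")
    case True
    then obtain i where "i<k" "\<theta> i \<le> t \<and> t < \<theta> (Suc i)" using Suc by auto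
    then show ?thesis by (intro exI[of _ i]) auto
  next
    case False
    then show ?thesis using Suc.prems by (intro exI[of _ k]) auto
  qed
qed

lemma poly_deriv:
  assumes P: "polygonal_interp c \<theta> k d" and i: "i < k" "\<theta> i < t" "t < \<theta> (Suc i)"
  shows "(d has_vector_derivative ((c (\<theta> (Suc i)) - c (\<theta> i)) /\<^sub>R (\<theta> (Suc i) - \<theta> i))) (at t)"
proof -
  let ?D = "\<theta> (Suc i) - \<theta> i"
  let ?C = "c (\<theta> (Suc i)) - c (\<theta> i)"
  let ?g = "\<lambda>s. c (\<theta> i) + ((s - \<theta> i) / ?D) *\<^sub>R ?C"
  have "(?g has_vector_derivative ((1 / ?D) *\<^sub>R ?C)) (at t)"
    using i by (auto intro!: derivative_eq_intros)
  then have "(?g has_vector_derivative (?C /\<^sub>R ?D)) (at t)"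
    using i by (simp add: divide_inverse_commute)
  then show ?thesis
  proof (rule has_vector_derivative_transform_within_open)
    show "open {\<theta> i<..<\<theta> (Suc i)}" by simp
    show "t \<in> {\<theta> i<..<\<theta> (Suc i)}" using i by simp
    fix y assume "y \<in> {\<theta> i<..<\<theta> (Suc i)}"
    then show "?g y = d y" using P i unfolding polygonal_interp_def
      by (auto simp: scaleR_conv_of_real)
  qed
qed

lemma seg_unique:
  fixes \<theta> :: "nat \<Rightarrow> real"
  assumes inc: "\<forall>i<k. \<theta> i < \<theta> (Suc i)" and ij: "i < k" "j < k"
    and "\<theta> i < t" "t < \<theta> (Suc i)" "\<theta> j < t" "t < \<theta> (Suc j)"
  shows "i = j"
proof (rule ccontr)
  assume "i \<noteq> j"
  then consider "i < j" | "j < i" by linarith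
  then show False
  proof cases
    case 1
    have "\<theta> (Suc i) \<le> \<theta> j" using theta_mono[OF inc, of "Suc i" j] 1 ij by (cases "Suc i = j") auto
    then show False using assms by linarith
  next
    case 2
    have "\<theta> (Suc j) \<le> \<theta> i" using theta_mono[OF inc, of "Suc j" i] 2 ij by (cases "Suc j = i") auto
    then show False using assms by linarith
  qed
qed

lemma fgauss_meas:
  fixes f :: "complex \<Rightarrow> real"
  assumes gm: "gauss_map d \<in> borel_measurable (lebesgue_on S)" and f: "continuous_on (sphere 0 1) f"
  shows "(\<lambda>t. f (gauss_map d t)) \<in> borel_measurable (lebesgue_on S)"
proof -
  have G: "gauss_map d \<in> measurable (lebesgue_on S) (restrict_space borel (sphere (0::complex) 1))"
    by (rule measurable_restrict_space2) (use gm gauss_sphere in auto)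
  have fm: "f \<in> borel_measurable (restrict_space borel (sphere 0 1))"
    using f by (rule borel_measurable_continuous_on_restrict)
  show ?thesis using measurable_compose[OF G fm] by simp
qed

lemma AE_from_negl:
  assumes "negligible N" "\<And>t. t \<in> S - N \<Longrightarrow> P t" "S \<in> sets lebesgue"
  shows "AE t in lebesgue_on S. P t"
proof -
  have "AE t in lebesgue. t \<in> S \<longrightarrow> P t"
    by (rule AE_I'[of N]) (use assms negligible_iff_null_sets in auto)
  then show ?thesis using assms(3) by (simp add: AE_restrict_space_iff)
qed

theorem proposition2p12:
  fixes c :: "real \<Rightarrow> complex"
    and \<theta> :: "nat \<Rightarrow> nat \<Rightarrow> real"
    and k :: "nat \<Rightarrow> nat"
    and cn :: "nat \<Rightarrow> real \<Rightarrow> complex"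
  assumes "curve_class c"
    and "piecewise_C2_bounded c"
    and "\<And>n. polygonal_interp c (\<theta> n) (k n) (cn n)"
    and "(\<lambda>n. Max {\<theta> n (Suc i) - \<theta> n i | i. i < k n}) \<longlonglongrightarrow> 0"
  shows "weak_conv_circle (\<lambda>n. length_measure (cn n)) (length_measure c)"
proof -
  let ?S = "{0..<2*pi}"
  let ?M = "lebesgue_on ?S"
  have Sl: "?S \<in> sets lebesgue" by simp
  from assms(1) obtain L where L: "L-lipschitz_on UNIV c"
    and AEc: "AE t in lborel. c differentiable (at t) \<and> vector_derivative c (at t) \<noteq> 0"
    unfolding curve_class_def by blast
  have L0: "L \<ge> 0" using L by (simp add: lipschitz_on_def)
  have contc: "continuous_on UNIV c" using L lipschitz_on_continuous_on by blast
  define N0 where "N0 = {t. \<not> (c differentiable (at t) \<and> vector_derivative c (at t) \<noteq> 0)}"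
  have negN0: "negligible N0"
  proof -
    have "AE t in lebesgue. c differentiable (at t) \<and> vector_derivative c (at t) \<noteq> 0"
      using AE_completion[OF AEc] .
    then have "{t \<in> space lebesgue. \<not> (c differentiable (at t) \<and> vector_derivative c (at t) \<noteq> 0)} \<in> null_sets lebesgue"
      by (rule completion.AE_iff_null_sets[THEN iffD1])
    then show ?thesis by (simp add: N0_def negligible_iff_null_sets)
  qed
  define V where "V = (\<lambda>(n,i). \<theta> n i) ` UNIV"
  have negV: "negligible V"
  proof -
    have "countable V" unfolding V_def by simp
    then have "negligible (\<Union> ((\<lambda>x. {x}) ` V))"
      by (intro negligible_countable_Union) auto
    then show ?thesis by simp
  qed
  have th0: "\<theta> n 0 = 0" and thk: "\<theta> n (k n) = 2*pi" and inc: "\<forall>i<k n. \<theta> n i < \<theta> n (Suc i)" for n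
    using assms(3)[of n] unfolding polygonal_interp_def by auto
  define sl where "sl n i = (c (\<theta> n (Suc i)) - c (\<theta> n i)) /\<^sub>R (\<theta> n (Suc i) - \<theta> n i)" for n i
  have seg: "\<exists>i<k n. \<theta> n i < t \<and> t < \<theta> n (Suc i)" if tS: "t \<in> ?S - V" for n t
  proof -
    obtain i where i: "i < k n" "\<theta> n i \<le> t" "t < \<theta> n (Suc i)"
      using seg_exists[OF inc[of n], of t] tS th0 thk by auto
    have "t \<noteq> \<theta> n i" using tS unfolding V_def by auto
    then show ?thesis using i by (intro exI[of _ i]) auto
  qed
  have derc: "(cn n has_vector_derivative sl n i) (at t)"
    if "i < k n" "\<theta> n i < t" "t < \<theta> n (Suc i)" for n i t
    unfolding sl_def by (rule poly_deriv[OF assms(3) that])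
  have vdc: "vector_derivative (cn n) (at t) = sl n i" "cn n differentiable (at t)"
    if "i < k n" "\<theta> n i < t" "t < \<theta> n (Suc i)" for n i t
    using derc[OF that] vector_derivative_at differentiableI_vector by blast+
  have slb: "norm (sl n i) \<le> L" if "i < k n" for n i
  proof -
    have pos: "\<theta> n (Suc i) - \<theta> n i > 0" using inc[of n] that by auto
    have "norm (c (\<theta> n (Suc i)) - c (\<theta> n i)) \<le> L * (\<theta> n (Suc i) - \<theta> n i)"
      using lipschitz_onD[OF L, of "\<theta> n (Suc i)" "\<theta> n i"] pos by (simp add: dist_norm)
    then show ?thesis using pos unfolding sl_def by (simp add: divide_simps)
  qed
  have dif_n: "cn n differentiable (at t)" if "t \<in> ?S - V" for n t
    using seg[OF that, of n] vdc by blast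
  have idm[measurable]: "(\<lambda>w::real. w) \<in> borel_measurable ?M"
    using id_borel_measurable_lebesgue_on[of ?S] by (simp add: id_def)
  have vm_n: "(\<lambda>t. vector_derivative (cn n) (at t)) \<in> borel_measurable ?M" for n
  proof (rule spike_meas[OF _ Sl negV])
    let ?g = "\<lambda>t. \<Sum>i<k n. (if \<theta> n i < t \<and> t < \<theta> n (Suc i) then sl n i else 0)"
    show "?g \<in> borel_measurable ?M" by measurable
    fix t assume t: "t \<in> ?S - V"
    then obtain i where i: "i < k n" "\<theta> n i < t" "t < \<theta> n (Suc i)" using seg by blast
    have "?g t = (\<Sum>j<k n. (if j = i then sl n j else 0))"
      by (rule sum.cong) (use seg_unique[OF inc[of n]] i in auto)
    also have "\<dots> = sl n i" using i by simp
    finally show "vector_derivative (cn n) (at t) = ?g t" using vdc(1)[OF i] by simp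
  qed
  have gm_n: "gauss_map (cn n) \<in> borel_measurable ?M" for n
    by (rule gauss_meas[OF vm_n Sl negV dif_n])
  have vm_c: "(\<lambda>t. vector_derivative c (at t)) \<in> borel_measurable ?M"
    by (rule vd_meas[OF contc Sl negN0]) (auto simp: N0_def)
  have gm_c: "gauss_map c \<in> borel_measurable ?M"
    by (rule gauss_meas[OF vm_c Sl negN0]) (auto simp: N0_def)
  show ?thesis unfolding weak_conv_circle_def
  proof (intro allI impI)
    fix f :: "complex \<Rightarrow> real" assume f: "continuous_on (sphere 0 1) f"
    have "compact (f ` sphere 0 1)" by (intro compact_continuous_image f) simp
    then obtain B where B: "\<And>x. x \<in> sphere 0 1 \<Longrightarrow> \<bar>f x\<bar> \<le> B"
      using compact_imp_bounded bounded_iff by (metis image_eqI real_norm_def)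
    have B0: "B \<ge> 0" using B[of 1] by simp
    have eqn: "integral\<^sup>L (length_measure (cn n)) f = integral\<^sup>L ?M
       (\<lambda>t. norm (vector_derivative (cn n) (at t)) * f (gauss_map (cn n) t))" for n
      by (rule length_integral[OF gm_n _ f]) (use vm_n in measurable)
    have eqc: "integral\<^sup>L (length_measure c) f = integral\<^sup>L ?M
       (\<lambda>t. norm (vector_derivative c (at t)) * f (gauss_map c t))"
      by (rule length_integral[OF gm_c _ f]) (use vm_c in measurable)
    show "(\<lambda>n. integral\<^sup>L (length_measure (cn n)) f) \<longlonglongrightarrow> integral\<^sup>L (length_measure c) f"
      unfolding eqn eqc
    proof (rule integral_dominated_convergence[where w="\<lambda>_. L * B"])
      show "(\<lambda>t. norm (vector_derivative c (at t)) * f (gauss_map c t)) \<in> borel_measurable ?M"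
        using fgauss_meas[OF gm_c f] vm_c by measurable
      show "(\<lambda>t. norm (vector_derivative (cn n) (at t)) * f (gauss_map (cn n) t)) \<in> borel_measurable ?M" for n
        using fgauss_meas[OF gm_n f] vm_n by measurable
      show "integrable ?M (\<lambda>_. L * B)"
        by (intro finite_measure.integrable_const finite_measure_lebesgue_on bounded_set_imp_lmeasurable)
          (auto intro: bounded_subset[of "{0..2*pi}"])
      show "AE t in ?M. norm (norm (vector_derivative (cn n) (at t)) * f (gauss_map (cn n) t)) \<le> L * B" for n
      proof (rule AE_from_negl[OF negV _ Sl])
        fix t assume t: "t \<in> ?S - V"
        then obtain i where i: "i < k n" "\<theta> n i < t" "t < \<theta> n (Suc i)" using seg by blast
        have "norm (vector_derivative (cn n) (at t)) \<le> L" using vdc(1)[OF i] slb[OF i(1)] by simp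
        moreover have "\<bar>f (gauss_map (cn n) t)\<bar> \<le> B" using B gauss_sphere by blast
        ultimately show "norm (norm (vector_derivative (cn n) (at t)) * f (gauss_map (cn n) t)) \<le> L * B"
          by (simp add: abs_mult mult_mono L0 B0)
      qed
      show "AE t in ?M. (\<lambda>n. norm (vector_derivative (cn n) (at t)) * f (gauss_map (cn n) t))
          \<longlonglongrightarrow> norm (vector_derivative c (at t)) * f (gauss_map c t)"
      proof (rule AE_from_negl[OF negligible_Un[OF negN0 negV] _ Sl])
        fix t assume t: "t \<in> ?S - (N0 \<union> V)"
        then have tV: "t \<in> ?S - V" by auto
        have cd: "c differentiable (at t)" "vector_derivative c (at t) \<noteq> 0" using t by (auto simp: N0_def)
        have "\<forall>n. \<exists>i. i < k n \<and> \<theta> n i < t \<and> t < \<theta> n (Suc i)" using seg[OF tV] by blast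
        then obtain ii where ii: "\<And>n. ii n < k n" "\<And>n. \<theta> n (ii n) < t" "\<And>n. t < \<theta> n (Suc (ii n))"
          by metis
        have vdn: "vector_derivative (cn n) (at t) = sl n (ii n)" "cn n differentiable (at t)" for n
          using vdc[OF ii(1) ii(2) ii(3)] by auto
        have mesh: "(\<lambda>n. \<theta> n (Suc (ii n)) - \<theta> n (ii n)) \<longlonglongrightarrow> 0"
        proof (rule real_tendsto_sandwich[OF _ _ tendsto_const assms(4)])
          show "\<forall>\<^sub>F n in sequentially. 0 \<le> \<theta> n (Suc (ii n)) - \<theta> n (ii n)"
          proof (intro always_eventually allI)
            fix n show "0 \<le> \<theta> n (Suc (ii n)) - \<theta> n (ii n)" using ii(2)[of n] ii(3)[of n] by linarith
          qed
          show "\<forall>\<^sub>F n in sequentially. \<theta> n (Suc (ii n)) - \<theta> n (ii n) \<le> Max {\<theta> n (Suc i) - \<theta> n i | i. i < k n}"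
          proof (intro always_eventually allI Max_ge)
            fix n
            have "{\<theta> n (Suc i) - \<theta> n i | i. i < k n} = (\<lambda>i. \<theta> n (Suc i) - \<theta> n i) ` {..<k n}" by auto
            then show "finite {\<theta> n (Suc i) - \<theta> n i | i. i < k n}" by simp
            show "\<theta> n (Suc (ii n)) - \<theta> n (ii n) \<in> {\<theta> n (Suc i) - \<theta> n i | i. i < k n}" using ii by blast
          qed
        qed
        have slim: "(\<lambda>n. sl n (ii n)) \<longlonglongrightarrow> vector_derivative c (at t)"
          unfolding sl_def
        proof (rule chord_tendsto[OF _ _ _ _ mesh])
          show "(c has_vector_derivative vector_derivative c (at t)) (at t)"
            using cd(1) vector_derivative_works by blast
          show "\<theta> n (ii n) \<le> t" "t \<le> \<theta> n (Suc (ii n))" "\<theta> n (ii n) < \<theta> n (Suc (ii n))" for n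
            using ii(2)[of n] ii(3)[of n] by linarith+
        qed
        have ev: "\<forall>\<^sub>F n in sequentially. sl n (ii n) \<noteq> 0"
          using tendsto_imp_eventually_ne[OF slim cd(2)] .
        have ev2: "\<forall>\<^sub>F n in sequentially. sgn (sl n (ii n)) = gauss_map (cn n) t"
          using ev by eventually_elim (simp add: gauss_map_def vdn)
        have tl: "(\<lambda>n. sgn (sl n (ii n))) \<longlonglongrightarrow> gauss_map c t"
          using tendsto_sgn[OF slim cd(2)] cd by (simp add: gauss_map_def)
        have glim: "(\<lambda>n. gauss_map (cn n) t) \<longlonglongrightarrow> gauss_map c t"
          by (rule Lim_transform_eventually[OF tl ev2])
        have flim: "(\<lambda>n. f (gauss_map (cn n) t)) \<longlonglongrightarrow> f (gauss_map c t)"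
          by (rule continuous_on_tendsto_compose[OF f glim]) (auto simp: gauss_norm intro!: always_eventually)
        have nlim: "(\<lambda>n. norm (vector_derivative (cn n) (at t))) \<longlonglongrightarrow> norm (vector_derivative c (at t))"
          unfolding vdn by (rule tendsto_norm[OF slim])
        show "(\<lambda>n. norm (vector_derivative (cn n) (at t)) * f (gauss_map (cn n) t))
          \<longlonglongrightarrow> norm (vector_derivative c (at t)) * f (gauss_map c t)"
          by (rule tendsto_mult[OF nlim flim])
      qed
    qed
  qed
qed

end
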